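(* In the two-tier residency matching game described in the context (list length $K$, high-match value $v>1$), under the large market approximation, if a symmetric equilibrium exists for high doctors, then it is either an equilibrium in pure strategies, or a mixed strategy equilibrium in which high doctors randomize between two consecutive strategies $(k,K-k)$ and $(k+1,K-k-1)$ for some integer $k$.
   Context: Model: there are high-tier and low-tier doctors and high-tier and low-tier hospitals, each hospital having one position. Every hospital prefers every high doctor to every low doctor, and every doctor prefers every high hospital to every low hospital; within a tier, preferences are independent uniformly random permutations. Each doctor submits a ranked list of exactly $K$ hospitals; hospitals submit full true rankings; doctor-proposing deferred acceptance is run. A doctor's strategy is a pair $(k,K-k)$: he lists his $k$ most preferred high hospitals followed by his $K-k$ most preferred low hospitals. A doctor gets value $v>1$ if matched to a high hospital, $1$ if matched to a low one, $0$ otherwise. Large market approximation: in the limit of many agents (tier proportions, $K$, $v$ fixed), given the strategy profile, each application of a high doctor to a high (resp. low) hospital is accepted independently with a probability $p$ (resp. $p'$) determined by the aggregate profile via fixed-point equations (expected matched doctors = expected hospitals receiving at least one application, a hospital with on average $\lambda$ applications receiving none with probability $e^{-\lambda}$), and unaffected by an individual doctor's choice. Since hospitals rank all high doctors above low ones, the high doctors' assignment does not depend on low doctors. A symmetric equilibrium for high doctors is a (possibly mixed) strategy used by all high doctors such that every strategy in its support maximizes a high doctor's expected value given $p,p'$. *)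

theory Defs
  imports Complex_Main
begin

text \<open>A (mixed) strategy profile of high doctors
is a probability vector sig over the pure strategies k = 0..K, where pure strategy k
means the list (k, K-k). The parameters p and p' are the acceptance probabilities of
an application of a high doctor to a high resp. low hospital.\<close>

definition is_mixed_strategy :: "nat \<Rightarrow> (nat \<Rightarrow> real) \<Rightarrow> bool" where
  "is_mixed_strategy K sig \<longleftrightarrow>
     (\<forall>k. 0 \<le> sig k) \<and> (\<forall>k>K. sig k = 0) \<and> (\<Sum>k\<le>K. sig k) = 1"

text \<open>Expected value of pure strategy (k, K-k): the doctor applies down his list and
ends at the first hospital that accepts him; each application to a high (low)
hospital is accepted independently with probability p (p').\<close>
definition strat_value :: "real \<Rightarrow> nat \<Rightarrow> real \<Rightarrow> real \<Rightarrow> nat \<Rightarrow> real" where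
  "strat_value v K p p' k =
     v * (1 - (1 - p) ^ k) + (1 - p) ^ k * (1 - (1 - p') ^ (K - k))"

definition match_high :: "nat \<Rightarrow> (nat \<Rightarrow> real) \<Rightarrow> real \<Rightarrow> real" where
  "match_high K sig p = (\<Sum>k\<le>K. sig k * (1 - (1 - p) ^ k))"

definition match_low :: "nat \<Rightarrow> (nat \<Rightarrow> real) \<Rightarrow> real \<Rightarrow> real \<Rightarrow> real" where
  "match_low K sig p p' = (\<Sum>k\<le>K. sig k * ((1 - p) ^ k * (1 - (1 - p') ^ (K - k))))"

text \<open>Fixed-point equations. dH, hH, hL are the masses (proportions) of high doctors,
high hospitals and low hospitals. Each matched doctor made on average 1/p applications
to high hospitals (geometric), so the total number of applications to high hospitals is
dH * match_high / p, i.e. lambda = that divided by hH per hospital; a hospital receives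
no application with probability exp(-lambda). Expected matched doctors = expected
hospitals receiving at least one application.\<close>
definition fixed_point :: "real \<Rightarrow> real \<Rightarrow> real \<Rightarrow> nat \<Rightarrow> (nat \<Rightarrow> real) \<Rightarrow> real \<Rightarrow> real \<Rightarrow> bool" where
  "fixed_point dH hH hL K sig p p' \<longleftrightarrow>
     dH * match_high K sig p = hH * (1 - exp (- (dH * match_high K sig p / p) / hH)) \<and>
     dH * match_low K sig p p' = hL * (1 - exp (- (dH * match_low K sig p p' / p') / hL))"

definition sym_equilibrium :: "real \<Rightarrow> nat \<Rightarrow> (nat \<Rightarrow> real) \<Rightarrow> real \<Rightarrow> real \<Rightarrow> bool" where
  "sym_equilibrium v K sig p p' \<longleftrightarrow>
     is_mixed_strategy K sig \<and>
     (\<forall>k\<le>K. 0 < sig k \<longrightarrow> (\<forall>j\<le>K. strat_value v K p p' j \<le> strat_value v K p p' k))"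

definition support :: "nat \<Rightarrow> (nat \<Rightarrow> real) \<Rightarrow> nat set" where
  "support K sig = {k. k \<le> K \<and> 0 < sig k}"

end

theory Submission
  imports Defs
begin

lemma diff_formula:
  fixes v q r :: real and K k :: nat
  assumes "k < K"
  shows "(v * (1 - q ^ Suc k) + q ^ Suc k * (1 - r ^ (K - Suc k)))
       - (v * (1 - q ^ k) + q ^ k * (1 - r ^ (K - k)))
       = q ^ k * ((v - 1) * (1 - q) + (r - q) * r ^ (K - Suc k))"
proof -
  have "K - k = Suc (K - Suc k)" using assms by simp
  then have e: "r ^ (K - k) = r * r ^ (K - Suc k)" by simp
  show ?thesis unfolding e by (simp add: algebra_simps)
qed

lemma D_mono:
  fixes v q r :: real and K j k :: nat
  assumes "v > 1" "0 \<le> q" "q < 1" "0 \<le> r" "r < 1" "j < k" "k < K"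
  shows "(v - 1) * (1 - q) + (r - q) * r ^ (K - Suc j) > 0
       \<or> (v - 1) * (1 - q) + (r - q) * r ^ (K - Suc j)
         > (v - 1) * (1 - q) + (r - q) * r ^ (K - Suc k)"
proof -
  have c: "(v - 1) * (1 - q) > 0" using assms by simp
  show ?thesis
  proof (cases "r \<ge> q")
    case True
    then have "(r - q) * r ^ (K - Suc j) \<ge> 0" using assms by simp
    then show ?thesis using c by linarith
  next
    case False
    show ?thesis
    proof (cases "r = 0")
      case True
      have "K - Suc j > 0" using assms by simp
      then have "r ^ (K - Suc j) = 0" using True by (simp add: zero_power)
      then have "(r - q) * r ^ (K - Suc j) = 0" by simp
      then show ?thesis using c by linarith
    next
      case r0: False
      have lt: "K - Suc j > K - Suc k" using assms by simp
      have "r ^ (K - Suc j) < r ^ (K - Suc k)"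
        using power_strict_decreasing[OF lt, of r] assms r0 by simp
      then have "(r - q) * r ^ (K - Suc j) > (r - q) * r ^ (K - Suc k)"
        using False by (simp add: mult_strict_left_mono_neg)
      then show ?thesis by linarith
    qed
  qed
qed

lemma support_shape:
  fixes S :: "nat set"
  assumes fin: "finite S" and ne: "S \<noteq> {}" and le: "\<forall>x\<in>S. x \<le> K"
    and cons: "\<And>a b. a \<in> S \<Longrightarrow> b \<in> S \<Longrightarrow> a < b \<Longrightarrow> b = a + 1"
  shows "(\<exists>k. S = {k}) \<or> (\<exists>k. k + 1 \<le> K \<and> S = {k, k + 1})"
proof -
  define k where "k = Min S"
  have kS: "k \<in> S" using fin ne k_def by simp
  have kmin: "\<And>x. x \<in> S \<Longrightarrow> k \<le> x" using fin k_def by simp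
  show ?thesis
  proof (cases "S = {k}")
    case True then show ?thesis by blast
  next
    case False
    then obtain b where b: "b \<in> S" "b \<noteq> k" using kS by blast
    then have "b = k + 1" using cons[OF kS b(1)] kmin[OF b(1)] by simp
    have "S \<subseteq> {k, k+1}"
    proof
      fix x assume xS: "x \<in> S"
      show "x \<in> {k, k+1}"
      proof (cases "x = k")
        case True then show ?thesis by simp
      next
        case False
        then have "k < x" using kmin[OF xS] by simp
        then show ?thesis using cons[OF kS xS] by simp
      qed
    qed
    then have "S = {k, k+1}" using kS b \<open>b = k + 1\<close> by blast
    then show ?thesis using le b \<open>b = k+1\<close> by blast
  qed
qed

lemma fp_zero:
  fixes x :: real assumes "x \<ge> 0" "x = 1 - exp (- x)" shows "x = 0"
proof (rule ccontr)
  assume "x \<noteq> 0"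
  then have "x > 0" using assms by simp
  show False
  proof (cases "x \<le> 2")
    case True
    have e: "exp (- x) = exp (- x / 2) ^ 2"
      by (simp add: power2_eq_square exp_add[symmetric])
    have h: "1 + (- x / 2) \<le> exp (- x / 2)" by (rule exp_ge_add_one_self)
    have "0 \<le> 1 - x / 2" using True by simp
    then have "(1 - x / 2) ^ 2 \<le> exp (- x / 2) ^ 2"
      using h by (intro power_mono) auto
    then have "1 - x + x^2/4 \<le> exp (- x)" unfolding e by (simp add: power2_eq_square algebra_simps)
    moreover have "x^2/4 > 0" using \<open>x > 0\<close> by simp
    ultimately show False using assms by linarith
  next
    case False
    then show False using assms exp_gt_zero[of "-x"] by linarith
  qed
qed

theorem lemma1:
  fixes v dH hH hL p p' :: real and K :: nat and sig :: "nat \<Rightarrow> real"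
  assumes "v > 1"
    and "dH > 0" and "hH > 0" and "hL > 0"
    and "0 < p" and "p \<le> 1" and "0 < p'" and "p' \<le> 1"
    and "fixed_point dH hH hL K sig p p'"
    and "sym_equilibrium v K sig p p'"
  shows "(\<exists>k. support K sig = {k})
       \<or> (\<exists>k. k + 1 \<le> K \<and> support K sig = {k, k + 1})"
proof -
  note eq = assms(10)[unfolded sym_equilibrium_def is_mixed_strategy_def]
  have sig0: "\<And>k. 0 \<le> sig k" using eq by blast
  have sum1: "(\<Sum>k\<le>K. sig k) = 1" using eq by blast
  have br: "\<And>k j. k \<le> K \<Longrightarrow> 0 < sig k \<Longrightarrow> j \<le> K \<Longrightarrow>
      strat_value v K p p' j \<le> strat_value v K p p' k" using eq by blast
  define S where "S = support K sig"
  have fin: "finite S" unfolding S_def support_def by simp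
  have le: "\<forall>x\<in>S. x \<le> K" unfolding S_def support_def by simp
  have ne: "S \<noteq> {}"
  proof
    assume "S = {}"
    then have "\<forall>k\<le>K. sig k = 0" unfolding S_def support_def using sig0
      by (metis (mono_tags, lifting) empty_iff le_less mem_Collect_eq)
    then have "(\<Sum>k\<le>K. sig k) = 0" by simp
    then show False using sum1 by simp
  qed
  show ?thesis
  proof (cases "p = 1")
    case True
    have nn: "\<And>k. 0 \<le> sig k * (1 - (1 - p) ^ k)" unfolding True
      using sig0 by (simp add: power_0_left)
    define y where "y = dH * match_high K sig p / hH"
    have mh0: "match_high K sig p \<ge> 0" unfolding match_high_def True
      using nn unfolding True by (intro sum_nonneg) simp
    have "dH * match_high K sig p = hH * (1 - exp (- (dH * match_high K sig p / p) / hH))"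
      using assms(9) unfolding fixed_point_def by blast
    then have "y = 1 - exp (- y)" unfolding y_def True using assms(3)
      by (simp add: field_simps)
    moreover have "y \<ge> 0" unfolding y_def using mh0 assms(2,3) by simp
    ultimately have "y = 0" using fp_zero by blast
    then have mh: "match_high K sig p = 0" unfolding y_def using assms(2,3) by simp
    have "\<forall>k\<in>{..K}. sig k * (1 - (1 - p) ^ k) = 0"
      using mh nn unfolding match_high_def
      by (subst sum_nonneg_eq_0_iff[symmetric]) auto
    then have "\<And>k. k \<in> S \<Longrightarrow> k = 0" unfolding S_def support_def True
      by (auto simp: power_0_left split: if_splits)
    then have "S = {0}" using ne by blast
    then show ?thesis unfolding S_def by blast
  next
    case False
    have q0: "0 < 1 - p" using False assms(6) by simp
    have q1: "1 - p < 1" using assms(5) by simp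
    have r0: "0 \<le> 1 - p'" using assms(8) by simp
    have r1: "1 - p' < 1" using assms(7) by simp
    have cons: "b = a + 1" if aS: "a \<in> S" and bS: "b \<in> S" and ab: "a < b" for a b
    proof (rule ccontr)
      assume "b \<noteq> a + 1"
      then have ab2: "a < b - 1" "b - 1 < K" using ab le bS by auto
      have aK: "a \<le> K" "0 < sig a" using aS unfolding S_def support_def by auto
      have bK: "b \<le> K" "0 < sig b" using bS unfolding S_def support_def by auto
      have bs: "Suc (b - 1) = b" using ab by simp
      have "strat_value v K p p' (Suc a) \<le> strat_value v K p p' a"
        using br[OF aK] ab2 by simp
      then have "(1 - p) ^ a * ((v - 1) * (1 - (1 - p)) + ((1 - p') - (1 - p)) * (1 - p') ^ (K - Suc a)) \<le> 0"
        using diff_formula[of a K v "1 - p" "1 - p'"] ab2 unfolding strat_value_def by linarith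
      then have Da: "(v - 1) * (1 - (1 - p)) + ((1 - p') - (1 - p)) * (1 - p') ^ (K - Suc a) \<le> 0"
        using zero_less_power[OF q0, of a] by (meson mult_pos_pos not_le)
      have "strat_value v K p p' (b - 1) \<le> strat_value v K p p' (Suc (b - 1))"
        using br[OF bK, of "b - 1"] bK bs by simp
      then have "(1 - p) ^ (b - 1) * ((v - 1) * (1 - (1 - p)) + ((1 - p') - (1 - p)) * (1 - p') ^ (K - Suc (b - 1))) \<ge> 0"
        using diff_formula[of "b - 1" K v "1 - p" "1 - p'"] ab2 unfolding strat_value_def by linarith
      then have Db: "(v - 1) * (1 - (1 - p)) + ((1 - p') - (1 - p)) * (1 - p') ^ (K - Suc (b - 1)) \<ge> 0"
        using zero_less_power[OF q0, of "b - 1"] by (meson mult_pos_neg not_le)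
      show False using D_mono[OF assms(1) _ q1 r0 r1 ab2] q0 Da Db by linarith
    qed
    show ?thesis using support_shape[OF fin ne le cons] unfolding S_def by blast
  qed
qed

end
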